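(* Let $F_1,\dots,F_k$ be $d\times d$ positive semidefinite matrices with $\sum_{j=1}^kF_j\preceq\mathbb{I}$, let $\lambda\in\mathbb{R}^k$, and let $\ell(\lambda\cdot F)=\operatorname{tr}\exp(\lambda\cdot F)$. Define the $k\times k$ matrices $$\Delta=\sum_j\frac{\partial\ell(\lambda\cdot F)}{\partial\lambda_j}|j\rangle\langle j|,\qquad \Lambda=\sum_{j,j'}\frac{\partial^2\ell(\lambda\cdot F)}{\partial\lambda_j\,\partial\lambda_{j'}}|j\rangle\langle j'|.$$ Then $\Lambda\preceq\Delta$.
   Context: $\lambda\cdot F=\sum_j\lambda_jF_j$. $A\preceq B$ means $B-A$ is positive semidefinite. *)

theory Defs
  imports "HOL-Analysis.Analysis"
begin

definition cquad :: "complex^'d^'d \<Rightarrow> complex^'d \<Rightarrow> complex" where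
  "cquad A x = (\<Sum>i\<in>UNIV. cnj (x $ i) * (A *v x) $ i)"

text \<open>Positive semidefinite (complex): x* A x is a nonnegative real for every x
  (this forces A to be Hermitian).\<close>
definition cpsd :: "complex^'d^'d \<Rightarrow> bool" where
  "cpsd A \<longleftrightarrow> (\<forall>x. cquad A x \<in> \<real> \<and> 0 \<le> Re (cquad A x))"

definition cloewner_le :: "complex^'d^'d \<Rightarrow> complex^'d^'d \<Rightarrow> bool" where
  "cloewner_le A B \<longleftrightarrow> cpsd (B - A)"

definition rpsd :: "real^'k^'k \<Rightarrow> bool" where
  "rpsd M \<longleftrightarrow> transpose M = M \<and> (\<forall>x. 0 \<le> x \<bullet> (M *v x))"

definition rloewner_le :: "real^'k^'k \<Rightarrow> real^'k^'k \<Rightarrow> bool" where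
  "rloewner_le A B \<longleftrightarrow> rpsd (B - A)"

definition mpow :: "complex^'d^'d \<Rightarrow> nat \<Rightarrow> complex^'d^'d" where
  "mpow A n = (((**) A) ^^ n) (mat 1)"

definition mexp :: "complex^'d^'d \<Rightarrow> complex^'d^'d" where
  "mexp A = (\<Sum>n. (1 / fact n) *\<^sub>R mpow A n)"

definition mtrace :: "complex^'d^'d \<Rightarrow> complex" where
  "mtrace A = (\<Sum>i\<in>UNIV. A $ i $ i)"

definition lin_comb :: "real^'k \<Rightarrow> ('k \<Rightarrow> complex^'d^'d) \<Rightarrow> complex^'d^'d" where
  "lin_comb lam F = (\<Sum>j\<in>UNIV. (lam $ j) *\<^sub>R F j)"

text \<open>ell(lambda . F) = tr exp(lambda . F), real-valued since lambda . F is Hermitian.\<close>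
definition ell :: "('k \<Rightarrow> complex^'d^'d) \<Rightarrow> real^'k \<Rightarrow> real" where
  "ell F lam = Re (mtrace (mexp (lin_comb lam F)))"

definition pderiv_coord :: "(real^'k \<Rightarrow> real) \<Rightarrow> 'k \<Rightarrow> real^'k \<Rightarrow> real" where
  "pderiv_coord g j lam = deriv (\<lambda>t. g (lam + t *\<^sub>R axis j 1)) 0"

definition Delta_mat :: "('k \<Rightarrow> complex^'d^'d) \<Rightarrow> real^'k \<Rightarrow> real^'k^'k" where
  "Delta_mat F lam = (\<chi> i j. if i = j then pderiv_coord (ell F) j lam else 0)"

definition Lambda_mat :: "('k \<Rightarrow> complex^'d^'d) \<Rightarrow> real^'k \<Rightarrow> real^'k^'k" where
  "Lambda_mat F lam = (\<chi> i j. pderiv_coord (pderiv_coord (ell F) j) i lam)"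

end

theory Submission
  imports Defs
begin

definition ip :: "complex^'d \<Rightarrow> complex^'d \<Rightarrow> complex" where
  "ip x y = (\<Sum>i\<in>UNIV. cnj (x $ i) * y $ i)"

definition herm :: "complex^'d^'d \<Rightarrow> bool" where
  "herm A \<longleftrightarrow> (\<forall>i j. A $ i $ j = cnj (A $ j $ i))"

lemma cquad_ip: "cquad A x = ip x (A *v x)"
  by (simp add: cquad_def ip_def)

lemma ip_add_right: "ip x (y + z) = ip x y + ip x z"
  by (simp add: ip_def distrib_left sum.distrib)
lemma ip_diff_right: "ip x (y - z) = ip x y - ip x z"
  by (simp add: ip_def right_diff_distrib sum_subtractf)
lemma ip_add_left: "ip (x + y) z = ip x z + ip y z"
  by (simp add: ip_def distrib_right sum.distrib)
lemma ip_diff_left: "ip (x - y) z = ip x z - ip y z"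
  by (simp add: ip_def left_diff_distrib sum_subtractf)
lemma ip_smult_right: "ip x (c *s y) = c * ip x y"
  by (simp add: ip_def sum_distrib_left mult.assoc mult.left_commute)
lemma ip_smult_left: "ip (c *s x) y = cnj c * ip x y"
  by (simp add: ip_def sum_distrib_left mult.assoc mult.left_commute)
lemma ip_scaleR_right: "ip x (c *\<^sub>R y) = of_real c * ip x y"
  unfolding ip_def sum_distrib_left vector_scaleR_component
  by (intro sum.cong refl) (simp add: scaleR_conv_of_real)
lemma ip_scaleR_left: "ip (c *\<^sub>R x) y = of_real c * ip x y"
  unfolding ip_def sum_distrib_left vector_scaleR_component
  by (intro sum.cong refl) (simp add: scaleR_conv_of_real)
lemma ip_zero_right[simp]: "ip x 0 = 0" by (simp add: ip_def)
lemma ip_zero_left[simp]: "ip 0 x = 0" by (simp add: ip_def)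
lemma ip_sum_right: "ip x (sum f S) = (\<Sum>s\<in>S. ip x (f s))"
  by (induction S rule: infinite_finite_induct) (simp_all add: ip_add_right)
lemma ip_sum_left: "ip (sum f S) x = (\<Sum>s\<in>S. ip (f s) x)"
  by (induction S rule: infinite_finite_induct) (simp_all add: ip_add_left)
lemma ip_cnj: "cnj (ip x y) = ip y x"
  by (simp add: ip_def mult.commute)

lemma norm_sq_vec: "(norm (x::complex^'d))^2 = (\<Sum>i\<in>UNIV. (cmod (x$i))^2)"
  by (simp add: norm_vec_def L2_set_def sum_nonneg)

lemma ip_self: "ip x x = of_real ((norm x)^2)"
proof -
  have "ip x x = (\<Sum>i\<in>UNIV. of_real ((cmod (x$i))^2))"
    unfolding ip_def by (intro sum.cong refl) (metis complex_norm_square mult.commute)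
  also have "\<dots> = of_real ((norm x)^2)" by (simp add: norm_sq_vec)
  finally show ?thesis .
qed

lemma Re_ip_self: "Re (ip x x) = (norm x)^2" by (simp add: ip_self)

lemma ip_self_eq0: "ip x x = 0 \<longleftrightarrow> x = 0"
  by (simp add: ip_self)

lemma herm_ip: assumes "herm A" shows "ip x (A *v y) = ip (A *v x) y"
proof -
  have "ip x (A *v y) = (\<Sum>i\<in>UNIV. \<Sum>j\<in>UNIV. cnj (x$i) * A$i$j * y$j)"
    by (simp add: ip_def matrix_vector_mult_def sum_distrib_left mult.assoc)
  also have "\<dots> = (\<Sum>j\<in>UNIV. \<Sum>i\<in>UNIV. cnj (x$i) * A$i$j * y$j)" by (rule sum.swap)
  also have "\<dots> = (\<Sum>j\<in>UNIV. (\<Sum>i\<in>UNIV. cnj (A$j$i * x$i)) * y$j)"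
    using assms unfolding herm_def sum_distrib_right
    by (intro sum.cong refl) (metis complex_cnj_cnj complex_cnj_mult mult.commute)
  also have "\<dots> = ip (A *v x) y"
    by (simp add: ip_def matrix_vector_mult_def)
  finally show ?thesis .
qed

lemma ip_axis_left: "ip (axis i 1) y = y $ i"
  by (simp add: ip_def axis_def if_distrib if_distribR cong: if_cong)
lemma ip_axis_mat: "ip (axis i 1) (A *v axis j 1) = A $ i $ j"
  unfolding ip_axis_left by (simp add: ip_axis_left matrix_vector_mult_def axis_def if_distrib if_distribR cong: if_cong)

lemma matvec_add: "(A::complex^'d^'d) *v (x + y) = A *v x + A *v y"
  by (simp add: matrix_vector_right_distrib)
lemma matvec_smult: "(A::complex^'d^'d) *v (c *s x) = c *s (A *v x)"
  by (simp add: vec_eq_iff matrix_vector_mult_def sum_distrib_left mult.left_commute)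

lemma cquad_add: "cquad A (x + y) = cquad A x + cquad A y + ip x (A *v y) + ip y (A *v x)"
  by (simp add: cquad_ip matvec_add ip_add_left ip_add_right)

lemma cpsd_herm: assumes "cpsd A" shows "herm A"
  unfolding herm_def
proof (intro allI)
  fix i j
  have R: "cquad A x \<in> \<real>" for x using assms by (simp add: cpsd_def)
  let ?a = "A$i$j" and ?b = "A$j$i"
  have q1: "cquad A (axis i 1) = A$i$i" "cquad A (axis j 1) = A$j$j"
    by (simp_all add: cquad_ip ip_axis_mat)
  have "cquad A (axis i 1 + axis j 1) = A$i$i + A$j$j + ?a + ?b"
    by (simp add: cquad_add q1 ip_axis_mat)
  hence "A$i$i + A$j$j + ?a + ?b \<in> \<real>" using R by metis
  moreover have "A$i$i \<in> \<real>" "A$j$j \<in> \<real>" using R q1 by metis+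
  ultimately have i1: "Im (?a + ?b) = 0"
    by (simp add: complex_is_Real_iff)
  have c2: "cquad A (\<i> *s axis j 1) = A$j$j"
    unfolding cquad_ip matvec_smult ip_smult_left ip_smult_right ip_axis_mat by simp
  have "cquad A (axis i 1 + \<i> *s axis j 1) = A$i$i + A$j$j + \<i> * ?a - \<i> * ?b"
    unfolding cquad_add q1 c2 matvec_smult ip_smult_left ip_smult_right ip_axis_mat by simp
  hence "A$i$i + A$j$j + \<i> * ?a - \<i> * ?b \<in> \<real>" using R by metis
  hence "Im (A$i$i + A$j$j + \<i> * ?a - \<i> * ?b) = 0" by (simp add: complex_is_Real_iff)
  moreover have "Im (A$i$i) = 0" "Im (A$j$j) = 0"
    using \<open>A$i$i \<in> \<real>\<close> \<open>A$j$j \<in> \<real>\<close> by (simp_all add: complex_is_Real_iff)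
  ultimately have i2: "Re ?a - Re ?b = 0" by simp
  show "?a = cnj ?b" using i1 i2 by (simp add: complex_eq_iff)
qed

lemma matvec_scaleR: "(A::complex^'d^'d) *v (c *\<^sub>R x) = c *\<^sub>R (A *v x)"
  unfolding vec_eq_iff matrix_vector_mult_def vector_scaleR_component
  by (simp add: scaleR_sum_right)

lemma ofreal_smult: "(complex_of_real r) *s (x::complex^'d) = r *\<^sub>R x"
  unfolding vec_eq_iff vector_scaleR_component by (simp add: scaleR_conv_of_real)

lemma smult_decomp1: "(c::complex) * z = Re c *\<^sub>R z + Im c *\<^sub>R (\<i> * z)"
proof -
  have "Re c *\<^sub>R z + Im c *\<^sub>R (\<i> * z) = (complex_of_real (Re c) + \<i> * complex_of_real (Im c)) * z"
    by (simp add: scaleR_conv_of_real distrib_right)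
  also have "complex_of_real (Re c) + \<i> * complex_of_real (Im c) = c" by (rule complex_eq[symmetric])
  finally show ?thesis by simp
qed

lemma smult_decomp: "(c::complex) *s (x::complex^'d) = Re c *\<^sub>R x + Im c *\<^sub>R (\<i> *s x)"
  unfolding vec_eq_iff vector_scaleR_component vector_add_component vector_smult_component
  by (intro allI) (rule smult_decomp1)

lemma subspace_smult:
  assumes "subspace S" "\<forall>v\<in>S. \<i> *s v \<in> S" "v \<in> S"
  shows "(c::complex) *s v \<in> S"
proof -
  have "Re c *\<^sub>R v + Im c *\<^sub>R (\<i> *s v) \<in> S" using assms by (intro subspace_add subspace_scale) auto
  thus ?thesis by (subst smult_decomp)
qed

lemma quad_zero_lin:
  fixes a b :: real
  assumes "\<And>t. 2*t*a + t^2*b \<le> 0"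
  shows "a = 0"
proof -
  define p where "p = 1 + \<bar>b\<bar>"
  define t where "t = a / p"
  have pos: "p > 0" unfolding p_def by simp
  have "2*t*a + t^2*b \<le> 0" by (rule assms)
  hence "(2*t*a + t^2*b) * p^2 \<le> 0"
    by (simp add: mult_nonpos_nonneg)
  also have "(2*t*a + t^2*b) * p^2 = a^2 * (2*p + b)"
    unfolding t_def using pos by (simp add: field_simps power2_eq_square)
  also have "2*p + b = 2 + 2*\<bar>b\<bar> + b" unfolding p_def by simp
  finally have "a^2 * (2 + 2*\<bar>b\<bar> + b) \<le> 0" .
  moreover have "2 + 2*\<bar>b\<bar> + b > 0" by linarith
  ultimately have "a^2 \<le> 0" by (simp add: mult_le_0_iff)
  thus ?thesis by simp
qed

lemma eigen_exists:
  fixes H :: "complex^'d^'d"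
  assumes hH: "herm H" and sS: "subspace S" and inv: "\<forall>v\<in>S. H *v v \<in> S"
    and iS: "\<forall>v\<in>S. \<i> *s v \<in> S" and ne: "v1 \<in> S" "v1 \<noteq> 0"
  shows "\<exists>v\<in>S. ip v v = 1 \<and> (\<exists>c::real. H *v v = c *\<^sub>R v)"
proof -
  define T where "T = S \<inter> sphere 0 1"
  define f where "f v = Re (ip v (H *v v))" for v
  have "compact T" unfolding T_def
    using compact_Int_closed[OF compact_sphere closed_subspace[OF sS], of 0 1] by (simp add: Int_commute)
  have "(1 / norm v1) *\<^sub>R v1 \<in> T"
    unfolding T_def using ne sS by (simp add: subspace_scale)
  hence "T \<noteq> {}" by auto
  have "continuous_on T f"
    unfolding f_def ip_def matrix_vector_mult_def
    by (intro continuous_intros)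
  then obtain v0 where v0: "v0 \<in> T" and vmax: "\<And>y. y \<in> T \<Longrightarrow> f y \<le> f v0"
    using continuous_attains_sup[OF \<open>compact T\<close> \<open>T \<noteq> {}\<close>] by blast
  define M where "M = f v0"
  have v0S: "v0 \<in> S" and nv0: "norm v0 = 1" using v0 unfolding T_def by auto
  have ip00: "ip v0 v0 = 1" using nv0 by (simp add: ip_self)
  have fscale: "f (c *\<^sub>R w) = c^2 * f w" for c w
    unfolding f_def matvec_scaleR ip_scaleR_left ip_scaleR_right
    by (simp add: power2_eq_square)
  have claim1: "f w \<le> M * (norm w)^2" if "w \<in> S" for w
  proof (cases "w = 0")
    case True thus ?thesis by (simp add: f_def)
  next
    case False
    hence "(1 / norm w) *\<^sub>R w \<in> T" unfolding T_def using that sS by (simp add: subspace_scale)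
    hence "f ((1 / norm w) *\<^sub>R w) \<le> M" using vmax M_def by blast
    hence "f w / (norm w)^2 \<le> M" by (simp add: fscale power_divide)
    thus ?thesis using False by (simp add: divide_le_eq mult.commute)
  qed
  have claim2: "Re (ip w (H *v v0)) = 0" if "w \<in> S" "ip v0 w = 0" for w
  proof -
    let ?a = "Re (ip w (H *v v0))"
    have "ip v0 (H *v w) = cnj (ip w (H *v v0))"
      using herm_ip[OF hH, of v0 w] ip_cnj[of w "H *v v0"] by simp
    hence hc: "Re (ip v0 (H *v w)) = ?a" by simp
    have wv: "ip w v0 = 0" using that(2) ip_cnj[of v0 w] by simp
    show ?thesis
    proof (rule quad_zero_lin)
      fix t :: real
      have zS: "v0 + t *\<^sub>R w \<in> S" using v0S that sS by (simp add: subspace_add subspace_scale)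
      have "f (v0 + t *\<^sub>R w) = M + t * ?a + t * ?a + t^2 * f w"
        unfolding f_def M_def matvec_add matvec_scaleR ip_add_left ip_add_right ip_scaleR_left ip_scaleR_right
        using hc by (simp add: power2_eq_square distrib_left)
      moreover have "(norm (v0 + t *\<^sub>R w))^2 = 1 + t^2 * (norm w)^2"
      proof -
        have "of_real ((norm (v0 + t *\<^sub>R w))^2) = ip (v0 + t *\<^sub>R w) (v0 + t *\<^sub>R w)"
          by (simp add: ip_self)
        also have "\<dots> = of_real (1 + t^2 * (norm w)^2)"
          unfolding ip_add_left ip_add_right ip_scaleR_left ip_scaleR_right ip00 wv that(2)
          by (simp add: ip_self power2_eq_square)
        finally show ?thesis using of_real_eq_iff by blast
      qed
      ultimately have "M + 2 * t * ?a + t^2 * f w \<le> M * (1 + t^2 * (norm w)^2)"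
        using claim1[OF zS] by simp
      thus "2 * t * ?a + t^2 * (f w - M * (norm w)^2) \<le> 0"
        by (simp add: algebra_simps)
    qed
  qed
  have claim3: "ip w (H *v v0) = 0" if "w \<in> S" "ip v0 w = 0" for w
  proof -
    have re0: "Re (ip w (H *v v0)) = 0" using claim2 that by blast
    moreover have "\<i> *s w \<in> S" using iS that by blast
    moreover have "ip v0 (\<i> *s w) = 0" using that by (simp add: ip_smult_right)
    ultimately have "Re (ip (\<i> *s w) (H *v v0)) = 0" using claim2 by blast
    hence "Im (ip w (H *v v0)) = 0" by (simp add: ip_smult_left)
    with re0 show ?thesis by (simp add: complex_eq_iff)
  qed
  define c where "c = ip v0 (H *v v0)"
  have "cnj c = ip (H *v v0) v0" unfolding c_def by (rule ip_cnj)
  hence creal: "cnj c = c" unfolding c_def using herm_ip[OF hH, of v0 v0] by simp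
  define z where "z = H *v v0 - c *s v0"
  have zS: "z \<in> S" unfolding z_def
    using sS inv v0S iS by (intro subspace_diff subspace_smult) auto
  have "ip v0 z = 0" unfolding z_def ip_diff_right ip_smult_right ip00 c_def by simp
  hence "ip z (H *v v0) = 0" using claim3 zS by blast
  moreover have "ip z v0 = 0" using \<open>ip v0 z = 0\<close> ip_cnj[of v0 z] by simp
  moreover have "ip z z = ip z (H *v v0) - c * ip z v0"
    using ip_diff_right[of z "H *v v0" "c *s v0"] ip_smult_right[of z c v0] unfolding z_def[symmetric] by simp
  ultimately have "ip z z = 0" by simp
  hence "z = 0" by (simp add: ip_self_eq0)
  hence "H *v v0 = c *s v0" unfolding z_def by simp
  moreover have "Im c = 0" using arg_cong[OF creal, of Im] by simp
  hence "c = complex_of_real (Re c)" by (simp add: complex_eq_iff)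
  ultimately have "H *v v0 = complex_of_real (Re c) *s v0" by simp
  hence "H *v v0 = Re c *\<^sub>R v0" by (simp only: ofreal_smult)
  thus ?thesis using v0S ip00 by blast
qed

definition onb :: "complex^'d^'d \<Rightarrow> (complex^'d) set \<Rightarrow> (complex^'d \<Rightarrow> real) \<Rightarrow> (complex^'d) set \<Rightarrow> bool" where
  "onb H U h S \<longleftrightarrow> finite U \<and> U \<subseteq> S \<and> (\<forall>u\<in>U. ip u u = 1) \<and> (\<forall>u\<in>U. \<forall>w\<in>U. u \<noteq> w \<longrightarrow> ip u w = 0)
     \<and> (\<forall>u\<in>U. H *v u = h u *\<^sub>R u) \<and> (\<forall>v\<in>S. v = (\<Sum>u\<in>U. ip u v *s u))"

lemma onbD:
  assumes "onb H U h S"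
  shows "finite U" "U \<subseteq> S" "\<And>u. u \<in> U \<Longrightarrow> ip u u = 1"
    "\<And>u w. u \<in> U \<Longrightarrow> w \<in> U \<Longrightarrow> u \<noteq> w \<Longrightarrow> ip u w = 0"
    "\<And>u. u \<in> U \<Longrightarrow> H *v u = h u *\<^sub>R u" "\<And>v. v \<in> S \<Longrightarrow> v = (\<Sum>u\<in>U. ip u v *s u)"
  using assms unfolding onb_def by blast+

lemma spectral_sub:
  fixes H :: "complex^'d^'d"
  assumes hH: "herm H"
  shows "subspace S \<Longrightarrow> (\<forall>v\<in>S. H *v v \<in> S) \<Longrightarrow> (\<forall>v\<in>S. \<i> *s v \<in> S) \<Longrightarrow> \<exists>U h. onb H U h S"
proof (induction "dim S" arbitrary: S rule: less_induct)
  case (less S)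
  show ?case
  proof (cases "\<exists>v1\<in>S. v1 \<noteq> 0")
    case False
    hence "onb H {} (\<lambda>_. 0) S" unfolding onb_def by auto
    thus ?thesis by blast
  next
    case True
    then obtain v1 where "v1 \<in> S" "v1 \<noteq> 0" by blast
    from eigen_exists[OF hH less.prems(1-3) this] obtain v0 c where
      v0S: "v0 \<in> S" and ip00: "ip v0 v0 = 1" and ev: "H *v v0 = c *\<^sub>R v0" by blast
    define S' where "S' = {w \<in> S. ip v0 w = 0}"
    have sS': "subspace S'"
      using less.prems(1) unfolding S'_def subspace_def
      by (auto simp: ip_add_right ip_scaleR_right)
    have invS': "\<forall>v\<in>S'. H *v v \<in> S'"
    proof
      fix v assume v: "v \<in> S'"
      have "ip v0 (H *v v) = ip (H *v v0) v" by (rule herm_ip[OF hH])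
      also have "\<dots> = 0" using v unfolding ev S'_def by (simp add: ip_scaleR_left)
      finally show "H *v v \<in> S'" using v less.prems(2) unfolding S'_def by auto
    qed
    have iS': "\<forall>v\<in>S'. \<i> *s v \<in> S'"
      using less.prems(3) unfolding S'_def by (auto simp: ip_smult_right)
    have "v0 \<notin> S'" unfolding S'_def using ip00 by simp
    have "S' \<subseteq> S" unfolding S'_def by blast
    hence "S' \<subset> S" using v0S \<open>v0 \<notin> S'\<close> by blast
    moreover have "span S' = S'" using sS' by (rule span_eq_iff[THEN iffD2])
    moreover have "span S = S" using less.prems(1) by (rule span_eq_iff[THEN iffD2])
    ultimately have "span S' \<subset> span S" by (simp only:)
    hence "dim S' < dim S" by (rule dim_psubset)
    from less.hyps[OF this sS' invS' iS'] obtain U' h' where onb': "onb H U' h' S'" by blast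
    define U where "U = insert v0 U'"
    define h where "h = h'(v0 := c)"
    have U'S': "U' \<subseteq> S'" using onbD(2)[OF onb'] .
    have v0U': "v0 \<notin> U'" using U'S' \<open>v0 \<notin> S'\<close> by blast
    have orth1: "ip v0 u = 0" if "u \<in> U'" for u using U'S' that unfolding S'_def by auto
    have orth2: "ip u v0 = 0" if "u \<in> U'" for u using orth1[OF that] ip_cnj[of v0 u] by simp
    have "onb H U h S"
      unfolding onb_def
    proof (intro conjI)
      show "finite U" using onbD(1)[OF onb'] unfolding U_def by simp
      show "U \<subseteq> S" using U'S' \<open>S' \<subseteq> S\<close> v0S unfolding U_def by blast
      show "\<forall>u\<in>U. ip u u = 1" using onbD(3)[OF onb'] ip00 unfolding U_def by blast
      show "\<forall>u\<in>U. \<forall>w\<in>U. u \<noteq> w \<longrightarrow> ip u w = 0"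
        using onbD(4)[OF onb'] orth1 orth2 unfolding U_def by blast
      show "\<forall>u\<in>U. H *v u = h u *\<^sub>R u"
      proof
        fix u assume "u \<in> U"
        thus "H *v u = h u *\<^sub>R u"
        proof (cases "u = v0")
          case True thus ?thesis using ev by (simp add: h_def)
        next
          case False thus ?thesis using \<open>u \<in> U\<close> onbD(5)[OF onb'] unfolding U_def h_def by simp
        qed
      qed
      show "\<forall>v\<in>S. v = (\<Sum>u\<in>U. ip u v *s u)"
      proof
        fix v assume vS: "v \<in> S"
        define w where "w = v - ip v0 v *s v0"
        have wS: "w \<in> S" unfolding w_def using less.prems(1,3) vS v0S
          by (intro subspace_diff subspace_smult) auto
        have "ip v0 w = 0" unfolding w_def ip_diff_right ip_smult_right ip00 by simp
        hence "w \<in> S'" using wS unfolding S'_def by auto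
        hence "w = (\<Sum>u\<in>U'. ip u w *s u)" by (rule onbD(6)[OF onb'])
        also have "\<dots> = (\<Sum>u\<in>U'. ip u v *s u)"
          by (intro sum.cong refl) (simp add: w_def ip_diff_right ip_smult_right orth2)
        finally have "v = ip v0 v *s v0 + (\<Sum>u\<in>U'. ip u v *s u)" unfolding w_def
          by (simp add: algebra_simps)
        also have "\<dots> = (\<Sum>u\<in>U. ip u v *s u)"
          unfolding U_def using onbD(1)[OF onb'] v0U' by (simp add: sum.insert)
        finally show "v = (\<Sum>u\<in>U. ip u v *s u)" .
      qed
    qed
    thus ?thesis by blast
  qed
qed

lemma spectral:
  fixes H :: "complex^'d^'d"
  assumes "herm H"
  shows "\<exists>U h. onb H U h UNIV"
  using spectral_sub[OF assms, of UNIV] by (simp add: subspace_UNIV)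

lemma norm_le_l1_gen: "norm (x::'a::real_normed_vector^'n) \<le> (\<Sum>i\<in>UNIV. norm (x$i))"
  unfolding norm_vec_def by (rule L2_set_le_sum) simp

lemma norm_entry_le: "norm ((A::complex^'d^'d) $ i $ j) \<le> norm A"
  using Finite_Cartesian_Product.norm_nth_le[of "A $ i" j] Finite_Cartesian_Product.norm_nth_le[of A i] by linarith

definition KK :: "'d::finite itself \<Rightarrow> real" where "KK _ = (real CARD('d))^3"

lemma KK_ge1[simp]: "KK (x::'d::finite itself) \<ge> 1"
proof -
  have "real CARD('d) \<ge> 1" by simp
  thus ?thesis unfolding KK_def by (simp add: one_le_power)
qed

lemma KK_nonneg[simp]: "KK (x::'d::finite itself) \<ge> 0"
  using KK_ge1[of x] by linarith

lemma norm_mmult: "norm ((A::complex^'d^'d) ** (B::complex^'d^'d)) \<le> norm A * norm B * KK TYPE('d)"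
proof -
  let ?d = "real CARD('d)"
  have e: "norm ((A ** B)$i$j) \<le> ?d * (norm A * norm B)" for i j
  proof -
    have "norm ((A ** B)$i$j) = norm (\<Sum>k\<in>UNIV. A$i$k * B$k$j)" by (simp add: matrix_matrix_mult_def)
    also have "\<dots> \<le> (\<Sum>k\<in>UNIV. norm (A$i$k * B$k$j))" by (rule norm_sum)
    also have "\<dots> \<le> (\<Sum>k\<in>(UNIV::'d set). norm A * norm B)"
      unfolding norm_mult by (rule sum_mono, rule mult_mono, rule norm_entry_le, rule norm_entry_le) auto
    also have "\<dots> = ?d * (norm A * norm B)" by simp
    finally show ?thesis .
  qed
  have r: "norm ((A ** B)$i) \<le> ?d * (?d * (norm A * norm B))" for i
  proof -
    have "norm ((A ** B)$i) \<le> (\<Sum>j\<in>UNIV. norm ((A ** B)$i$j))" by (rule norm_le_l1_gen)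
    also have "\<dots> \<le> (\<Sum>j\<in>(UNIV::'d set). ?d * (norm A * norm B))" by (intro sum_mono e)
    also have "\<dots> = ?d * (?d * (norm A * norm B))" by simp
    finally show ?thesis .
  qed
  have "norm (A ** B) \<le> (\<Sum>i\<in>UNIV. norm ((A ** B)$i))" by (rule norm_le_l1_gen)
  also have "\<dots> \<le> (\<Sum>i\<in>(UNIV::'d set). ?d * (?d * (norm A * norm B)))" by (intro sum_mono r)
  also have "\<dots> = norm A * norm B * KK TYPE('d)" by (simp add: KK_def power3_eq_cube)
  finally show ?thesis .
qed

lemma mmult_add_left: "((A::complex^'d^'d) + A') ** (B::complex^'d^'d) = A ** B + A' ** B"
  unfolding vec_eq_iff matrix_matrix_mult_def by (simp add: distrib_right sum.distrib)

lemma mmult_add_right: "(A::complex^'d^'d) ** ((B::complex^'d^'d) + B') = A ** B + A ** B'"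
  by (rule matrix_add_ldistrib)

lemma mmult_scaleR_left: "(r *\<^sub>R (A::complex^'d^'d)) ** (B::complex^'d^'d) = r *\<^sub>R (A ** B)"
  by (rule scalar_matrix_assoc[symmetric])

lemma mmult_scaleR_right: "(A::complex^'d^'d) ** (r *\<^sub>R (B::complex^'d^'d)) = r *\<^sub>R (A ** B)"
  by (simp add: matrix_scalar_ac scalar_matrix_assoc)

lemma bb_mmult: "bounded_bilinear ((**) :: complex^'d^'d \<Rightarrow> complex^'d^'d \<Rightarrow> complex^'d^'d)"
proof
  fix a a' b b' :: "complex^'d^'d" and r :: real
  show "(a + a') ** b = a ** b + a' ** b" by (rule mmult_add_left)
  show "a ** (b + b') = a ** b + a ** b'" by (rule mmult_add_right)
  show "(r *\<^sub>R a) ** b = r *\<^sub>R (a ** b)" by (rule mmult_scaleR_left)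
  show "a ** (r *\<^sub>R b) = r *\<^sub>R (a ** b)" by (rule mmult_scaleR_right)
next
  show "\<exists>K. \<forall>(a::complex^'d^'d) (b::complex^'d^'d). norm (a ** b) \<le> norm a * norm b * K"
    by (rule exI[of _ "KK TYPE('d)"]) (intro allI norm_mmult)
qed

lemma mpow_0[simp]: "mpow A 0 = mat 1" by (simp add: mpow_def)
lemma mpow_Suc: "mpow A (Suc n) = A ** mpow A n" by (simp add: mpow_def)

lemma mpow_add: "mpow (A::complex^'d^'d) (m + n) = mpow A m ** mpow A n"
  by (induction m) (simp_all add: mpow_Suc matrix_mul_assoc)

lemma mpow_norm: "norm (mpow (A::complex^'d^'d) n) \<le> norm (mat 1 :: complex^'d^'d) * (KK TYPE('d) * norm A)^n"
proof (induction n)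
  case 0 thus ?case by simp
next
  case (Suc n)
  have "norm (mpow A (Suc n)) \<le> norm A * norm (mpow A n) * KK TYPE('d)"
    unfolding mpow_Suc by (rule norm_mmult)
  also have "\<dots> \<le> norm A * (norm (mat 1 :: complex^'d^'d) * (KK TYPE('d) * norm A)^n) * KK TYPE('d)"
    using Suc by (intro mult_right_mono mult_left_mono) auto
  also have "\<dots> = norm (mat 1 :: complex^'d^'d) * (KK TYPE('d) * norm A)^(Suc n)"
    by (simp add: mult_ac)
  finally show ?case .
qed

lemma summable_mexp: "summable (\<lambda>n. (1 / fact n) *\<^sub>R mpow (A::complex^'d^'d) n)"
proof (rule summable_comparison_test')
  let ?c = "norm (mat 1 :: complex^'d^'d)" and ?x = "KK TYPE('d) * norm A"
  show "summable (\<lambda>n. ?c * (inverse (fact n) * ?x^n))"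
    by (intro summable_mult summable_exp)
  fix n :: nat
  have "norm ((1 / fact n) *\<^sub>R mpow A n) = inverse (fact n) * norm (mpow A n)"
    by (simp add: divide_inverse)
  also have "\<dots> \<le> inverse (fact n) * (?c * ?x^n)"
    by (intro mult_left_mono mpow_norm) simp
  finally show "norm ((1 / fact n) *\<^sub>R mpow A n) \<le> ?c * (inverse (fact n) * ?x^n)"
    by (simp add: mult_ac)
qed

definition Dn :: "complex^'d^'d \<Rightarrow> complex^'d^'d \<Rightarrow> nat \<Rightarrow> complex^'d^'d" where
  "Dn G B n = (\<Sum>a<n. mpow G a ** (B ** mpow G (n - Suc a)))"

lemma Dn_0[simp]: "Dn G B 0 = 0" by (simp add: Dn_def)

lemma Dn_Suc: "Dn G B (Suc n) = B ** mpow G n + G ** Dn G B n"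
proof -
  have "Dn G B (Suc n) = (\<Sum>a<Suc n. mpow G a ** (B ** mpow G (n - a)))"
    by (simp add: Dn_def)
  also have "\<dots> = mpow G 0 ** (B ** mpow G n) + (\<Sum>a<n. mpow G (Suc a) ** (B ** mpow G (n - Suc a)))"
    by (subst sum.lessThan_Suc_shift) simp
  also have "(\<Sum>a<n. mpow G (Suc a) ** (B ** mpow G (n - Suc a))) = (\<Sum>a<n. G ** (mpow G a ** (B ** mpow G (n - Suc a))))"
    by (intro sum.cong refl) (simp add: mpow_Suc matrix_mul_assoc)
  also have "\<dots> = G ** Dn G B n"
    unfolding Dn_def by (rule bounded_bilinear.sum_right[OF bb_mmult, symmetric])
  finally show ?thesis by simp
qed

lemma mpow_vderiv:
  fixes A B :: "complex^'d^'d"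
  shows "((\<lambda>t. mpow (A + t *\<^sub>R B) n) has_vector_derivative Dn (A + t *\<^sub>R B) B n) (at t)"
proof (induction n)
  case 0 thus ?case by simp
next
  case (Suc n)
  have G: "((\<lambda>t. A + t *\<^sub>R B) has_vector_derivative B) (at t)"
    by (auto intro!: derivative_eq_intros)
  have "((\<lambda>t. (A + t *\<^sub>R B) ** mpow (A + t *\<^sub>R B) n) has_vector_derivative
      ((A + t *\<^sub>R B) ** Dn (A + t *\<^sub>R B) B n + B ** mpow (A + t *\<^sub>R B) n)) (at t)"
    by (rule bounded_bilinear.has_vector_derivative[OF bb_mmult G Suc])
  thus ?case unfolding mpow_Suc Dn_Suc by (simp add: add.commute)
qed

lemma Dn_norm:
  fixes G B :: "complex^'d^'d"
  shows "norm (Dn G B n) \<le> real n * ((KK TYPE('d))^2 * norm B * (norm (mat 1 :: complex^'d^'d))^2 * (KK TYPE('d) * norm G)^(n - 1))"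
proof -
  let ?K = "KK TYPE('d)" and ?c = "norm (mat 1 :: complex^'d^'d)"
  have t: "norm (mpow G a ** (B ** mpow G (n - Suc a))) \<le> ?K^2 * norm B * ?c^2 * (?K * norm G)^(n - 1)"
    if "a < n" for a
  proof -
    have "norm (mpow G a ** (B ** mpow G (n - Suc a))) \<le> norm (mpow G a) * (norm B * norm (mpow G (n - Suc a)) * ?K) * ?K"
      using norm_mmult[of "mpow G a" "B ** mpow G (n - Suc a)"] norm_mmult[of B "mpow G (n - Suc a)"] KK_nonneg[of "TYPE('d)"]
      by (smt (verit, ccfv_SIG) mult_left_mono mult_right_mono norm_ge_zero)
    also have "\<dots> \<le> (?c * (?K * norm G)^a) * (norm B * (?c * (?K * norm G)^(n - Suc a)) * ?K) * ?K"
      by (intro mult_mono mpow_norm mult_nonneg_nonneg) auto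
    also have "\<dots> = ?K^2 * norm B * ?c^2 * ((?K * norm G)^a * (?K * norm G)^(n - Suc a))"
      by (simp add: power2_eq_square mult_ac)
    also have "(?K * norm G)^a * (?K * norm G)^(n - Suc a) = (?K * norm G)^(n - 1)"
      using that by (simp add: power_add[symmetric])
    finally show ?thesis .
  qed
  have "norm (Dn G B n) \<le> (\<Sum>a<n. norm (mpow G a ** (B ** mpow G (n - Suc a))))"
    unfolding Dn_def by (rule norm_sum)
  also have "\<dots> \<le> (\<Sum>a<n. ?K^2 * norm B * ?c^2 * (?K * norm G)^(n - 1))"
    by (intro sum_mono t) simp
  also have "\<dots> = real n * (?K^2 * norm B * ?c^2 * (?K * norm G)^(n - 1))" by simp
  finally show ?thesis .
qed

lemma summable_n_exp: "summable (\<lambda>n. real n * x^(n - 1) / fact n)"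
proof -
  have "summable (\<lambda>n. real (Suc n) * x^(Suc n - 1) / fact (Suc n))"
  proof -
    have "(\<lambda>n. real (Suc n) * x^(Suc n - 1) / fact (Suc n)) = (\<lambda>n. inverse (fact n) * x^n)"
      by (rule ext) (simp add: divide_simps del: of_nat_Suc)
    thus ?thesis using summable_exp by simp
  qed
  thus ?thesis by (rule summable_Suc_iff[THEN iffD1])
qed

lemma mtrace_add: "mtrace (A + B) = mtrace A + mtrace B" by (simp add: mtrace_def sum.distrib)

lemma bl_mtrace: "bounded_linear (mtrace :: complex^'d^'d \<Rightarrow> complex)"
proof -
  have "bounded_linear (\<lambda>A::complex^'d^'d. \<Sum>i\<in>UNIV. A $ i $ i)"
    by (intro bounded_linear_sum bounded_linear_compose[OF bounded_linear_vec_nth bounded_linear_vec_nth])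
  thus ?thesis unfolding mtrace_def[abs_def] .
qed

lemma bl_L: "bounded_linear (\<lambda>M::complex^'d^'d. Re (mtrace (C ** M)))"
  by (intro bounded_linear_compose[OF bounded_linear_Re] bounded_linear_compose[OF bl_mtrace]
      bounded_bilinear.bounded_linear_right[OF bb_mmult])

lemma DL:
  fixes A B C :: "complex^'d^'d"
  shows "((\<lambda>t. Re (mtrace (C ** mexp (A + t *\<^sub>R B)))) has_real_derivative
           (\<Sum>n. Re (mtrace (C ** Dn A B n)) / fact n)) (at 0)"
    and "summable (\<lambda>n. Re (mtrace (C ** Dn A B n)) / fact n)"
proof -
  define L where "L M = Re (mtrace (C ** M))" for M
  have bL: "bounded_linear L" unfolding L_def[abs_def] by (rule bl_L)
  interpret L: bounded_linear L by (rule bL)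
  obtain cL where cL: "\<And>M. norm (L M) \<le> norm M * cL" and cL0: "cL > 0"
    using L.pos_bounded by blast
  define S where "S = {-1<..<1::real}"
  define f where "f n t = L (mpow (A + t *\<^sub>R B) n) / fact n" for n t
  define f' where "f' n t = L (Dn (A + t *\<^sub>R B) B n) / fact n" for n t
  define K where "K = KK TYPE('d)"
  define c where "c = norm (mat 1 :: complex^'d^'d)"
  define R where "R = norm A + norm B"
  define Mb where "Mb n = cL * (K^2 * norm B * c^2) * (real n * (K * R)^(n - 1) / fact n)" for n
  have K0: "K \<ge> 0" unfolding K_def by simp
  have der: "(f n has_field_derivative f' n t) (at t within S)" for n t
  proof -
    have "((\<lambda>t. L (mpow (A + t *\<^sub>R B) n)) has_vector_derivative L (Dn (A + t *\<^sub>R B) B n)) (at t)"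
      by (rule L.has_vector_derivative[OF mpow_vderiv])
    hence "((\<lambda>t. L (mpow (A + t *\<^sub>R B) n)) has_real_derivative L (Dn (A + t *\<^sub>R B) B n)) (at t)"
      by (simp add: has_real_derivative_iff_has_vector_derivative)
    hence "((\<lambda>t. L (mpow (A + t *\<^sub>R B) n) / fact n) has_real_derivative L (Dn (A + t *\<^sub>R B) B n) / fact n) (at t)"
      by (rule DERIV_cdivide)
    hence "(f n has_real_derivative f' n t) (at t)"
      unfolding f_def[abs_def] f'_def by simp
    thus ?thesis by (rule has_field_derivative_at_within)
  qed
  have bnd: "norm (f' n t) \<le> Mb n" if t: "t \<in> S" for n t
  proof -
    let ?G = "A + t *\<^sub>R B"
    have "\<bar>t\<bar> < 1" using t unfolding S_def by auto
    have "norm ?G \<le> norm A + norm (t *\<^sub>R B)" by (rule norm_triangle_ineq)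
    also have "norm (t *\<^sub>R B) = \<bar>t\<bar> * norm B" by simp
    also have "\<bar>t\<bar> * norm B \<le> norm B" using \<open>\<bar>t\<bar> < 1\<close> by (simp add: mult_left_le_one_le)
    finally have nG: "norm ?G \<le> R" unfolding R_def by simp
    have pw: "(K * norm ?G)^(n - 1) \<le> (K * R)^(n - 1)"
      using nG K0 by (intro power_mono mult_left_mono) auto
    have "norm (L (Dn ?G B n)) \<le> norm (Dn ?G B n) * cL" by (rule cL)
    also have "\<dots> \<le> (real n * (K^2 * norm B * c^2 * (K * norm ?G)^(n - 1))) * cL"
      using cL0 unfolding K_def c_def by (intro mult_right_mono Dn_norm) auto
    also have "\<dots> \<le> (real n * (K^2 * norm B * c^2 * (K * R)^(n - 1))) * cL"
      using cL0 pw by (intro mult_right_mono mult_left_mono) auto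
    finally have "norm (L (Dn ?G B n)) / fact n \<le> (real n * (K^2 * norm B * c^2 * (K * R)^(n - 1))) * cL / fact n"
      by (simp add: divide_right_mono)
    also have "\<dots> = Mb n" unfolding Mb_def by (simp add: mult_ac)
    finally show ?thesis unfolding f'_def by (simp add: norm_divide)
  qed
  have sMb: "summable Mb" unfolding Mb_def by (intro summable_mult summable_n_exp)
  have unif: "uniform_limit S (\<lambda>n t. \<Sum>i<n. f' i t) (\<lambda>t. \<Sum>i. f' i t) sequentially"
    by (rule Weierstrass_m_test_ev[OF always_eventually sMb]) (use bnd in blast)
  hence uconv: "uniformly_convergent_on S (\<lambda>n t. \<Sum>i<n. f' i t)"
    unfolding uniformly_convergent_on_def by blast
  have S0: "0 \<in> S" and iS0: "0 \<in> interior S" and cS: "convex S"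
    unfolding S_def by (auto simp: interior_open)
  have fL: "f n t = L ((1 / fact n) *\<^sub>R mpow (A + t *\<^sub>R B) n)" for n t
    unfolding f_def L.scaleR by simp
  have sf0: "summable (\<lambda>n. f n 0)"
    unfolding fL by (rule L.summable[OF summable_mexp])
  have D: "((\<lambda>x. \<Sum>n. f n x) has_field_derivative (\<Sum>n. f' n 0)) (at 0)"
    by (rule has_field_derivative_series'(2)[OF cS der uconv S0 sf0 iS0])
  have fe: "(\<lambda>t. Re (mtrace (C ** mexp (A + t *\<^sub>R B)))) = (\<lambda>x. \<Sum>n. f n x)"
  proof
    fix t
    have "Re (mtrace (C ** mexp (A + t *\<^sub>R B))) = L (mexp (A + t *\<^sub>R B))" by (simp add: L_def)
    also have "\<dots> = (\<Sum>n. L ((1 / fact n) *\<^sub>R mpow (A + t *\<^sub>R B) n))"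
      unfolding mexp_def by (rule L.suminf[OF summable_mexp])
    finally show "Re (mtrace (C ** mexp (A + t *\<^sub>R B))) = (\<Sum>n. f n t)" unfolding fL .
  qed
  have f'0: "f' n 0 = Re (mtrace (C ** Dn A B n)) / fact n" for n
    by (simp add: f'_def L_def)
  show "((\<lambda>t. Re (mtrace (C ** mexp (A + t *\<^sub>R B)))) has_real_derivative
           (\<Sum>n. Re (mtrace (C ** Dn A B n)) / fact n)) (at 0)"
    using D unfolding fe f'0 .
  show "summable (\<lambda>n. Re (mtrace (C ** Dn A B n)) / fact n)"
    unfolding f'0[symmetric] by (rule summable_comparison_test'[OF sMb bnd[OF S0]])
qed

lemma lin_comb_axis: "lin_comb (lam + t *\<^sub>R axis j 1) F = lin_comb lam F + t *\<^sub>R F j"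
proof -
  have "lin_comb (lam + t *\<^sub>R axis j 1) F = (\<Sum>k\<in>UNIV. lam $ k *\<^sub>R F k + (t * axis j 1 $ k) *\<^sub>R F k)"
    unfolding lin_comb_def by (intro sum.cong refl) (simp add: scaleR_add_left)
  also have "\<dots> = lin_comb lam F + (\<Sum>k\<in>UNIV. (t * axis j 1 $ k) *\<^sub>R F k)"
    unfolding lin_comb_def by (rule sum.distrib)
  also have "(\<Sum>k\<in>UNIV. (t * axis j 1 $ k) *\<^sub>R F k) = (\<Sum>k\<in>UNIV. if k = j then t *\<^sub>R F k else 0)"
    by (intro sum.cong refl) (simp add: axis_def)
  also have "\<dots> = t *\<^sub>R F j" by simp
  finally show ?thesis .
qed

lemma mtrace_zero[simp]: "mtrace 0 = 0" by (simp add: mtrace_def)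

lemma mtrace_sum: "mtrace (sum f S) = (\<Sum>s\<in>S. mtrace (f s))"
  by (induction S rule: infinite_finite_induct) (simp_all add: mtrace_add)

lemma mtrace_comm: "mtrace ((A::complex^'d^'d) ** (B::complex^'d^'d)) = mtrace (B ** A)"
proof -
  have "mtrace (A ** B) = (\<Sum>i\<in>UNIV. \<Sum>k\<in>UNIV. A$i$k * B$k$i)"
    by (simp add: mtrace_def matrix_matrix_mult_def)
  also have "\<dots> = (\<Sum>k\<in>UNIV. \<Sum>i\<in>UNIV. A$i$k * B$k$i)" by (rule sum.swap)
  also have "\<dots> = mtrace (B ** A)"
    by (simp add: mtrace_def matrix_matrix_mult_def mult.commute)
  finally show ?thesis .
qed

lemma mtrace_Dn: "mtrace (Dn H B n) = of_nat n * mtrace (B ** mpow H (n - 1))"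
proof -
  have "mtrace (mpow H a ** (B ** mpow H (n - Suc a))) = mtrace (B ** mpow H (n - 1))" if "a < n" for a
  proof -
    have "mtrace (mpow H a ** (B ** mpow H (n - Suc a))) = mtrace ((B ** mpow H (n - Suc a)) ** mpow H a)"
      by (rule mtrace_comm)
    also have "\<dots> = mtrace (B ** (mpow H (n - Suc a) ** mpow H a))" by (simp add: matrix_mul_assoc)
    also have "mpow H (n - Suc a) ** mpow H a = mpow H (n - Suc a + a)" by (simp add: mpow_add)
    also have "n - Suc a + a = n - 1" using that by simp
    finally show ?thesis .
  qed
  hence "mtrace (Dn H B n) = (\<Sum>a<n. mtrace (B ** mpow H (n - 1)))"
    unfolding Dn_def mtrace_sum by (intro sum.cong refl) simp
  also have "\<dots> = of_nat n * mtrace (B ** mpow H (n - 1))" by simp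
  finally show ?thesis .
qed

lemma ell_line: "ell F (mu + t *\<^sub>R axis j 1) = Re (mtrace (mat 1 ** mexp (lin_comb mu F + t *\<^sub>R F j)))"
  by (simp add: ell_def lin_comb_axis)

lemma series_shift:
  fixes B H :: "complex^'d^'d"
  shows "(\<Sum>n. Re (mtrace (mat 1 ** Dn H B n)) / fact n) = Re (mtrace (B ** mexp H))"
proof -
  define g where "g m = Re (mtrace (B ** mpow H m))" for m
  define T where "T n = Re (mtrace (mat 1 ** Dn H B n)) / fact n" for n
  interpret L: bounded_linear "\<lambda>M::complex^'d^'d. Re (mtrace (B ** M))" by (rule bl_L)
  have "(\<lambda>m. Re (mtrace (B ** ((1 / fact m) *\<^sub>R mpow H m)))) sums Re (mtrace (B ** mexp H))"
    unfolding mexp_def by (rule L.sums[OF summable_sums[OF summable_mexp]])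
  hence s1: "(\<lambda>m. g m / fact m) sums Re (mtrace (B ** mexp H))"
    by (simp add: g_def L.scaleR)
  have TS: "T (Suc m) = g m / fact m" for m
  proof -
    have "T (Suc m) = Re (of_nat (Suc m) * mtrace (B ** mpow H m)) / fact (Suc m)"
      unfolding T_def by (simp add: mtrace_Dn)
    also have "\<dots> = real (Suc m) * g m / (real (Suc m) * fact m)"
      unfolding g_def by (simp del: of_nat_Suc)
    also have "\<dots> = g m / fact m" by simp
    finally show ?thesis .
  qed
  have T0: "T 0 = 0" by (simp add: T_def)
  have "(\<lambda>n. T (Suc n)) sums Re (mtrace (B ** mexp H))" unfolding TS by (rule s1)
  hence "T sums Re (mtrace (B ** mexp H))" using sums_Suc_iff[of T] T0 by simp
  thus ?thesis unfolding T_def by (rule sums_unique[symmetric])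
qed

lemma D1: "pderiv_coord (ell F) j mu = Re (mtrace (F j ** mexp (lin_comb mu F)))"
proof -
  have "((\<lambda>t. ell F (mu + t *\<^sub>R axis j 1)) has_real_derivative
     (\<Sum>n. Re (mtrace (mat 1 ** Dn (lin_comb mu F) (F j) n)) / fact n)) (at 0)"
    unfolding ell_line by (rule DL(1))
  hence "pderiv_coord (ell F) j mu = (\<Sum>n. Re (mtrace (mat 1 ** Dn (lin_comb mu F) (F j) n)) / fact n)"
    unfolding pderiv_coord_def by (rule DERIV_imp_deriv)
  thus ?thesis by (simp only: series_shift)
qed

lemma Lam_formula:
  "Lambda_mat F lam $ i $ j = (\<Sum>n. Re (mtrace (F j ** Dn (lin_comb lam F) (F i) n)) / fact n)"
proof -
  have "((\<lambda>t. pderiv_coord (ell F) j (lam + t *\<^sub>R axis i 1)) has_real_derivative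
      (\<Sum>n. Re (mtrace (F j ** Dn (lin_comb lam F) (F i) n)) / fact n)) (at 0)"
    unfolding D1 lin_comb_axis by (rule DL(1))
  hence "deriv (\<lambda>t. pderiv_coord (ell F) j (lam + t *\<^sub>R axis i 1)) 0 =
      (\<Sum>n. Re (mtrace (F j ** Dn (lin_comb lam F) (F i) n)) / fact n)"
    by (rule DERIV_imp_deriv)
  moreover have "Lambda_mat F lam $ i $ j = pderiv_coord (pderiv_coord (ell F) j) i lam"
    by (simp add: Lambda_mat_def)
  ultimately show ?thesis by (simp only: pderiv_coord_def[of "pderiv_coord (ell F) j" i lam])
qed

lemma Lam_summable:
  "summable (\<lambda>n. Re (mtrace (F j ** Dn (lin_comb lam F) (F i) n)) / fact n)"
  by (rule DL(2))

lemma Delta_formula: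
  "Delta_mat F lam $ i $ j = (if i = j then Re (mtrace (F j ** mexp (lin_comb lam F))) else 0)"
  by (simp add: Delta_mat_def D1)

definition sq :: "nat \<Rightarrow> real \<Rightarrow> real \<Rightarrow> real" where
  "sq n x y = (\<Sum>i<n. y^(n - Suc i) * x^i)"

definition Kf :: "real \<Rightarrow> real \<Rightarrow> real" where
  "Kf p q = (if p = q then exp p else (exp p - exp q) / (p - q))"

lemma exp_sums: "(\<lambda>n. (x::real)^n / fact n) sums exp x"
  using exp_converges[of x] by (simp add: divide_inverse mult.commute)

lemma sq_sums: "(\<lambda>n. sq n p q / fact n) sums Kf p q"
proof (cases "p = q")
  case True
  have e: "sq n p p = real n * p^(n - 1)" for n
  proof -
    have "sq n p p = (\<Sum>i<n. p^(n - 1))"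
      unfolding sq_def by (intro sum.cong refl) (simp add: power_add[symmetric])
    thus ?thesis by simp
  qed
  define T where "T n = sq n p p / fact n" for n
  have "T (Suc m) = p^m / fact m" for m
    unfolding T_def e by (simp add: divide_simps del: of_nat_Suc)
  hence "(\<lambda>n. T (Suc n)) sums exp p" using exp_sums[of p] by simp
  hence "T sums (exp p + T 0)" by (simp add: sums_Suc_iff)
  moreover have "T 0 = 0" by (simp add: T_def sq_def)
  ultimately have "T sums exp p" by simp
  thus ?thesis using True unfolding T_def Kf_def by simp
next
  case False
  have e: "sq n p q = (p^n - q^n) / (p - q)" for n
    using power_diff_sumr2[of p n q] False unfolding sq_def by (simp add: field_simps)
  have "(\<lambda>n. (p^n / fact n - q^n / fact n) / (p - q)) sums ((exp p - exp q) / (p - q))"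
    by (intro sums_divide sums_diff exp_sums)
  moreover have "(p^n / fact n - q^n / fact n) / (p - q) = sq n p q / fact n" for n
    unfolding e by (simp add: field_simps)
  ultimately show ?thesis using False by (simp add: Kf_def)
qed

lemma Kf_sym: "Kf p q = Kf q p"
  unfolding Kf_def by (auto simp: field_simps)

lemma aux_ineq: fixes d :: real assumes "d \<ge> 0" shows "2 * (exp d - 1) \<le> d * (exp d + 1)"
proof -
  define h where "h x = 1 - exp x + x * exp x" for x :: real
  define g where "g x = x * (exp x + 1) - 2 * (exp x - 1)" for x :: real
  have h0: "h x \<ge> 0" if "x \<ge> 0" for x
  proof -
    have "h 0 \<le> h x"
    proof (rule DERIV_nonneg_imp_nondecreasing[OF that])
      fix y assume y: "0 \<le> y" "y \<le> x"
      have "(h has_real_derivative y * exp y) (at y)"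
        unfolding h_def[abs_def] by (auto intro!: derivative_eq_intros)
      moreover have "y * exp y \<ge> 0" using y by simp
      ultimately show "\<exists>z. (h has_real_derivative z) (at y) \<and> 0 \<le> z" by blast
    qed
    thus ?thesis by (simp add: h_def)
  qed
  have "g 0 \<le> g d"
  proof (rule DERIV_nonneg_imp_nondecreasing[OF assms])
    fix y assume y: "0 \<le> y" "y \<le> d"
    have "(g has_real_derivative h y) (at y)"
      unfolding g_def[abs_def] h_def by (auto intro!: derivative_eq_intros simp: algebra_simps)
    thus "\<exists>z. (g has_real_derivative z) (at y) \<and> 0 \<le> z" using h0[OF y(1)] by blast
  qed
  thus ?thesis by (simp add: g_def)
qed

lemma Kf_le_pos: assumes "p > q" shows "Kf p q \<le> (exp p + exp q) / 2"
proof -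
  define d where "d = p - q"
  have d: "d > 0" using assms by (simp add: d_def)
  have ep: "exp p = exp q * exp d" unfolding d_def by (simp add: exp_diff)
  have "Kf p q = exp q * (exp d - 1) / d" using assms
    unfolding Kf_def ep d_def[symmetric] by (simp add: algebra_simps)
  also have "\<dots> \<le> exp q * (exp d + 1) / 2"
  proof -
    have "(exp d - 1) / d \<le> (exp d + 1) / 2"
      using aux_ineq[of d] d by (simp add: divide_simps mult.commute)
    thus ?thesis by (metis exp_gt_zero less_eq_real_def mult_left_mono times_divide_eq_right)
  qed
  also have "\<dots> = (exp p + exp q) / 2" unfolding ep by (simp add: algebra_simps)
  finally show ?thesis .
qed

lemma Kf_le: "Kf p q \<le> (exp p + exp q) / 2"
proof -
  consider "p = q" | "p > q" | "q > p" by linarith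
  thus ?thesis
  proof cases
    case 1 thus ?thesis by (simp add: Kf_def)
  next
    case 2 thus ?thesis by (rule Kf_le_pos)
  next
    case 3 thus ?thesis using Kf_le_pos[OF 3] Kf_sym[of p q] by (simp add: add.commute)
  qed
qed

definition vv :: "complex^'d^'d \<Rightarrow> complex^'d^'d \<Rightarrow> complex^'d \<Rightarrow> complex^'d \<Rightarrow> real" where
  "vv P Q a b = Re (cnj (ip b (P *v a)) * ip b (Q *v a))"

lemma matvec_col: "(M *v axis i 1) $ k = (M::complex^'d^'d) $ k $ i"
  by (simp add: matrix_vector_mult_def axis_def if_distrib if_distribR cong: if_cong)

lemma col_sum: "(\<Sum>i\<in>UNIV. (u$i) *s ((M::complex^'d^'d) *v axis i 1)) = M *v u"
  unfolding vec_eq_iff sum_component vector_smult_component matvec_col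
  by (simp add: matrix_vector_mult_def mult.commute)

lemma matvec_add_left: "((A::complex^'d^'d) + B) *v u = A *v u + B *v u"
  unfolding vec_eq_iff matrix_vector_mult_def by (simp add: distrib_right sum.distrib)

lemma matvec_scaleR_left: "(c *\<^sub>R (A::complex^'d^'d)) *v u = c *\<^sub>R (A *v u)"
  unfolding vec_eq_iff matrix_vector_mult_def vector_scaleR_component by (simp add: scaleR_sum_right)

lemma bl_matvec: "bounded_linear (\<lambda>M::complex^'d^'d. M *v u)"
proof -
  have "linear (\<lambda>M::complex^'d^'d. M *v u)"
    by (rule linearI) (simp_all add: matvec_add_left matvec_scaleR_left)
  thus ?thesis by (simp add: linear_conv_bounded_linear)
qed

lemma mpow_Suc_right: "mpow (H::complex^'d^'d) (Suc n) = mpow H n ** H"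
proof -
  have "mpow H (Suc n) = mpow H (n + 1)" by simp
  also have "\<dots> = mpow H n ** mpow H 1" by (rule mpow_add)
  also have "mpow H 1 = H" by (simp add: mpow_Suc)
  finally show ?thesis .
qed

context
  fixes H :: "complex^'d^'d" and U and h
  assumes onb: "onb H U h UNIV" and hH: "herm H"
begin

lemma finU: "finite U" by (rule onbD(1)[OF onb])

lemma parseval: "ip y z = (\<Sum>u\<in>U. cnj (ip u y) * ip u z)"
proof -
  have "z = (\<Sum>u\<in>U. ip u z *s u)" by (rule onbD(6)[OF onb]) simp
  hence "ip y z = ip y (\<Sum>u\<in>U. ip u z *s u)" by (rule arg_cong)
  also have "\<dots> = (\<Sum>u\<in>U. ip u z * ip y u)" by (simp add: ip_sum_right ip_smult_right)
  also have "\<dots> = (\<Sum>u\<in>U. cnj (ip u y) * ip u z)" by (intro sum.cong refl) (simp add: ip_cnj mult.commute)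
  finally show ?thesis .
qed

lemma mpow_eig: "u \<in> U \<Longrightarrow> mpow H n *v u = (h u ^ n) *\<^sub>R u"
proof (induction n)
  case 0 thus ?case by simp
next
  case (Suc n)
  have "mpow H (Suc n) *v u = H *v (mpow H n *v u)" by (simp add: mpow_Suc matrix_vector_mul_assoc)
  also have "\<dots> = (h u ^ n) *\<^sub>R (H *v u)" using Suc by (simp add: matvec_scaleR)
  also have "H *v u = h u *\<^sub>R u" using onbD(5)[OF onb Suc.prems] .
  finally show ?case by (simp add: mult.commute)
qed

lemma ip_mpow: "u \<in> U \<Longrightarrow> ip u (mpow H n *v z) = of_real (h u ^ n) * ip u z"
proof (induction n arbitrary: z)
  case 0 thus ?case by simp
next
  case (Suc n)
  have "ip u (mpow H (Suc n) *v z) = ip u (mpow H n *v (H *v z))"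
    by (simp add: mpow_Suc_right matrix_vector_mul_assoc)
  also have "\<dots> = of_real (h u ^ n) * ip u (H *v z)" using Suc by simp
  also have "ip u (H *v z) = ip (H *v u) z" by (rule herm_ip[OF hH])
  also have "\<dots> = of_real (h u) * ip u z" using onbD(5)[OF onb Suc.prems] by (simp add: ip_scaleR_left)
  finally show ?case by (simp add: mult.assoc)
qed

lemma mexp_eig: assumes "u \<in> U" shows "mexp H *v u = exp (h u) *\<^sub>R u"
proof -
  interpret L: bounded_linear "\<lambda>M::complex^'d^'d. M *v u" by (rule bl_matvec)
  have "(\<lambda>n. ((1 / fact n) *\<^sub>R mpow H n) *v u) sums (mexp H *v u)"
    unfolding mexp_def by (rule L.sums[OF summable_sums[OF summable_mexp]])
  moreover have "((1 / fact n) *\<^sub>R mpow H n) *v u = (h u ^ n / fact n) *\<^sub>R u" for n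
    using mpow_eig[OF assms] by (simp add: matvec_scaleR_left)
  ultimately have "(\<lambda>n. (h u ^ n / fact n) *\<^sub>R u) sums (mexp H *v u)" by simp
  moreover have "(\<lambda>n. (h u ^ n / fact n) *\<^sub>R u) sums (exp (h u) *\<^sub>R u)"
    by (rule sums_scaleR_left[OF exp_sums])
  ultimately show ?thesis using sums_unique2 by blast
qed

lemma trace_eig: "mtrace M = (\<Sum>u\<in>U. ip u (M *v u))"
proof -
  have "mtrace M = (\<Sum>i\<in>UNIV. ip (axis i 1) (M *v axis i 1))"
    unfolding mtrace_def by (simp add: ip_axis_mat)
  also have "\<dots> = (\<Sum>i\<in>UNIV. \<Sum>u\<in>U. cnj (ip u (axis i 1)) * ip u (M *v axis i 1))"
    by (intro sum.cong refl) (rule parseval)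
  also have "\<dots> = (\<Sum>u\<in>U. \<Sum>i\<in>UNIV. cnj (ip u (axis i 1)) * ip u (M *v axis i 1))"
    by (rule sum.swap)
  also have "\<dots> = (\<Sum>u\<in>U. ip u (M *v u))"
  proof (intro sum.cong refl)
    fix u
    have "(\<Sum>i\<in>UNIV. cnj (ip u (axis i 1)) * ip u (M *v axis i 1)) = (\<Sum>i\<in>UNIV. ip u ((u$i) *s (M *v axis i 1)))"
      by (intro sum.cong refl) (simp add: ip_smult_right ip_cnj ip_axis_left)
    also have "\<dots> = ip u (M *v u)" by (simp add: ip_sum_right[symmetric] col_sum)
    finally show "(\<Sum>i\<in>UNIV. cnj (ip u (axis i 1)) * ip u (M *v axis i 1)) = ip u (M *v u)" .
  qed
  finally show ?thesis .
qed

lemma trace_term: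
  assumes hP: "herm P"
  shows "Re (mtrace (P ** (mpow H a ** (Q ** mpow H b)))) = (\<Sum>\<alpha>\<in>U. \<Sum>\<beta>\<in>U. vv P Q \<alpha> \<beta> * (h \<beta> ^ a * h \<alpha> ^ b))"
proof -
  have "Re (mtrace (P ** (mpow H a ** (Q ** mpow H b)))) = (\<Sum>\<alpha>\<in>U. Re (ip \<alpha> ((P ** (mpow H a ** (Q ** mpow H b))) *v \<alpha>)))"
    by (simp add: trace_eig)
  also have "\<dots> = (\<Sum>\<alpha>\<in>U. \<Sum>\<beta>\<in>U. vv P Q \<alpha> \<beta> * (h \<beta> ^ a * h \<alpha> ^ b))"
  proof (intro sum.cong refl)
    fix \<alpha> assume a: "\<alpha> \<in> U"
    have "(P ** (mpow H a ** (Q ** mpow H b))) *v \<alpha> = P *v (mpow H a *v (Q *v (mpow H b *v \<alpha>)))"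
      by (simp add: matrix_vector_mul_assoc)
    also have "\<dots> = (h \<alpha> ^ b) *\<^sub>R (P *v (mpow H a *v (Q *v \<alpha>)))"
      by (simp add: mpow_eig[OF a] matvec_scaleR)
    finally have "ip \<alpha> ((P ** (mpow H a ** (Q ** mpow H b))) *v \<alpha>) = of_real (h \<alpha> ^ b) * ip (P *v \<alpha>) (mpow H a *v (Q *v \<alpha>))"
      by (simp add: ip_scaleR_right herm_ip[OF hP])
    also have "ip (P *v \<alpha>) (mpow H a *v (Q *v \<alpha>)) = (\<Sum>\<beta>\<in>U. cnj (ip \<beta> (P *v \<alpha>)) * (of_real (h \<beta> ^ a) * ip \<beta> (Q *v \<alpha>)))"
      unfolding parseval[of "P *v \<alpha>"] by (intro sum.cong refl) (simp add: ip_mpow)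
    finally have "Re (ip \<alpha> ((P ** (mpow H a ** (Q ** mpow H b))) *v \<alpha>)) =
       h \<alpha> ^ b * (\<Sum>\<beta>\<in>U. h \<beta> ^ a * Re (cnj (ip \<beta> (P *v \<alpha>)) * ip \<beta> (Q *v \<alpha>)))"
      by (simp add: sum_distrib_left mult.left_commute)
    also have "\<dots> = (\<Sum>\<beta>\<in>U. vv P Q \<alpha> \<beta> * (h \<beta> ^ a * h \<alpha> ^ b))"
      unfolding vv_def sum_distrib_left by (intro sum.cong refl) (simp add: mult_ac)
    finally show "Re (ip \<alpha> ((P ** (mpow H a ** (Q ** mpow H b))) *v \<alpha>)) = (\<Sum>\<beta>\<in>U. vv P Q \<alpha> \<beta> * (h \<beta> ^ a * h \<alpha> ^ b))" .
  qed
  finally show ?thesis .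
qed

lemma trace_Dn:
  assumes hP: "herm P"
  shows "Re (mtrace (P ** Dn H Q n)) = (\<Sum>\<alpha>\<in>U. \<Sum>\<beta>\<in>U. vv P Q \<alpha> \<beta> * sq n (h \<beta>) (h \<alpha>))"
proof -
  have "Re (mtrace (P ** Dn H Q n)) = (\<Sum>a<n. Re (mtrace (P ** (mpow H a ** (Q ** mpow H (n - Suc a))))))"
    unfolding Dn_def bounded_bilinear.sum_right[OF bb_mmult] mtrace_sum by simp
  also have "\<dots> = (\<Sum>a<n. \<Sum>\<alpha>\<in>U. \<Sum>\<beta>\<in>U. vv P Q \<alpha> \<beta> * (h \<beta> ^ a * h \<alpha> ^ (n - Suc a)))"
    by (simp add: trace_term[OF hP])
  also have "\<dots> = (\<Sum>\<alpha>\<in>U. \<Sum>a<n. \<Sum>\<beta>\<in>U. vv P Q \<alpha> \<beta> * (h \<beta> ^ a * h \<alpha> ^ (n - Suc a)))"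
    by (rule sum.swap)
  also have "\<dots> = (\<Sum>\<alpha>\<in>U. \<Sum>\<beta>\<in>U. \<Sum>a<n. vv P Q \<alpha> \<beta> * (h \<beta> ^ a * h \<alpha> ^ (n - Suc a)))"
    by (intro sum.cong refl) (rule sum.swap)
  also have "\<dots> = (\<Sum>\<alpha>\<in>U. \<Sum>\<beta>\<in>U. vv P Q \<alpha> \<beta> * sq n (h \<beta>) (h \<alpha>))"
    unfolding sq_def sum_distrib_left by (intro sum.cong refl) (simp add: mult.commute)
  finally show ?thesis .
qed

lemma Dn_sums:
  assumes hP: "herm P"
  shows "(\<lambda>n. Re (mtrace (P ** Dn H Q n)) / fact n) sums (\<Sum>\<alpha>\<in>U. \<Sum>\<beta>\<in>U. vv P Q \<alpha> \<beta> * Kf (h \<beta>) (h \<alpha>))"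
proof -
  have "(\<lambda>n. \<Sum>\<alpha>\<in>U. \<Sum>\<beta>\<in>U. vv P Q \<alpha> \<beta> * (sq n (h \<beta>) (h \<alpha>) / fact n)) sums (\<Sum>\<alpha>\<in>U. \<Sum>\<beta>\<in>U. vv P Q \<alpha> \<beta> * Kf (h \<beta>) (h \<alpha>))"
    by (intro sums_sum sums_mult sq_sums)
  moreover have "Re (mtrace (P ** Dn H Q n)) / fact n = (\<Sum>\<alpha>\<in>U. \<Sum>\<beta>\<in>U. vv P Q \<alpha> \<beta> * (sq n (h \<beta>) (h \<alpha>) / fact n))" for n
    unfolding trace_Dn[OF hP] sum_divide_distrib by (simp add: mult_ac)
  ultimately show ?thesis by simp
qed

lemma trace_mexp: "Re (mtrace (P ** mexp H)) = (\<Sum>\<alpha>\<in>U. exp (h \<alpha>) * Re (ip \<alpha> (P *v \<alpha>)))"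
proof -
  have "Re (mtrace (P ** mexp H)) = (\<Sum>\<alpha>\<in>U. Re (ip \<alpha> ((P ** mexp H) *v \<alpha>)))"
    by (simp add: trace_eig)
  also have "\<dots> = (\<Sum>\<alpha>\<in>U. exp (h \<alpha>) * Re (ip \<alpha> (P *v \<alpha>)))"
    by (intro sum.cong refl)
       (simp add: matrix_vector_mul_assoc[symmetric] mexp_eig matvec_scaleR ip_scaleR_right)
  finally show ?thesis .
qed

lemma norm_parseval: "Re (ip y y) = (\<Sum>\<beta>\<in>U. (cmod (ip \<beta> y))^2)"
proof -
  have "ip y y = (\<Sum>\<beta>\<in>U. cnj (ip \<beta> y) * ip \<beta> y)" by (rule parseval)
  also have "\<dots> = (\<Sum>\<beta>\<in>U. complex_of_real ((cmod (ip \<beta> y))^2))"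
    by (intro sum.cong refl) (metis complex_norm_square mult.commute)
  finally show ?thesis by simp
qed

end

lemma herm_lc:
  assumes "\<And>k. herm (F k)"
  shows "herm (lin_comb x F)"
  unfolding herm_def
proof (intro allI)
  fix i j
  have "lin_comb x F $ i $ j = (\<Sum>k\<in>UNIV. x$k *\<^sub>R (F k $ i $ j))"
    unfolding lin_comb_def by simp
  also have "\<dots> = (\<Sum>k\<in>UNIV. x$k *\<^sub>R cnj (F k $ j $ i))"
    using assms unfolding herm_def by (intro sum.cong refl) metis
  also have "\<dots> = cnj (lin_comb x F $ j $ i)"
    unfolding lin_comb_def by simp
  finally show "lin_comb x F $ i $ j = cnj (lin_comb x F $ j $ i)" .
qed

lemma matvec_lc:
  fixes F :: "'k::finite \<Rightarrow> complex^'d::finite^'d"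
  shows "lin_comb x F *v v = (\<Sum>k\<in>UNIV. x$k *\<^sub>R (F k *v v))"
proof -
  interpret L: bounded_linear "\<lambda>M::complex^'d^'d. M *v v" by (rule bl_matvec)
  show ?thesis unfolding lin_comb_def L.sum L.scaleR ..
qed

lemma ip_lc: "ip b (lin_comb x F *v a) = (\<Sum>k\<in>UNIV. of_real (x$k) * ip b (F k *v a))"
  unfolding matvec_lc ip_sum_right ip_scaleR_right ..

lemma vv_lc:
  "vv (lin_comb x F) (lin_comb x F) a b = (\<Sum>i\<in>UNIV. \<Sum>j\<in>UNIV. x$i * x$j * vv (F j) (F i) a b)"
proof -
  define z where "z k = ip b (F k *v a)" for k
  have "vv (lin_comb x F) (lin_comb x F) a b =
      Re ((\<Sum>j\<in>UNIV. of_real (x$j) * cnj (z j)) * (\<Sum>i\<in>UNIV. of_real (x$i) * z i))"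
    unfolding vv_def ip_lc z_def by simp
  also have "\<dots> = (\<Sum>j\<in>UNIV. \<Sum>i\<in>UNIV. x$j * x$i * Re (cnj (z j) * z i))"
    unfolding sum_product Re_sum by (intro sum.cong refl) (simp add: algebra_simps)
  also have "\<dots> = (\<Sum>i\<in>UNIV. \<Sum>j\<in>UNIV. x$j * x$i * Re (cnj (z j) * z i))"
    by (rule sum.swap)
  also have "\<dots> = (\<Sum>i\<in>UNIV. \<Sum>j\<in>UNIV. x$i * x$j * vv (F j) (F i) a b)"
    unfolding vv_def z_def by (intro sum.cong refl) (simp add: mult_ac)
  finally show ?thesis .
qed

lemma vv_sym:
  assumes "herm P" "herm Q"
  shows "vv P Q a b = vv Q P b a"
proof -
  have 1: "cnj (ip a (Q *v b)) = ip b (Q *v a)"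
    using herm_ip[OF assms(2), of a b] ip_cnj by metis
  have 2: "ip a (P *v b) = cnj (ip b (P *v a))"
    using herm_ip[OF assms(1), of a b] ip_cnj by metis
  show ?thesis unfolding vv_def 1 2 by (simp add: mult.commute)
qed

lemma vv_self: "vv P P a b = (cmod (ip b (P *v a)))^2"
proof -
  have "cnj (ip b (P *v a)) * ip b (P *v a) = complex_of_real ((cmod (ip b (P *v a)))^2)"
    by (metis complex_norm_square mult.commute)
  thus ?thesis unfolding vv_def by simp
qed

lemma quad2:
  fixes a c m :: real
  assumes "a \<ge> 0" "c \<ge> 0" "m \<ge> 0" "\<And>s. 0 \<le> a - 2 * s * m + s^2 * m * c"
  shows "m \<le> a * c"
proof (cases "m = 0")
  case True thus ?thesis using assms by simp
next
  case False
  hence m: "m > 0" using assms by simp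
  show ?thesis
  proof (cases "c = 0")
    case True
    have "0 \<le> a - 2*((a+1)/(2*m))*m + ((a+1)/(2*m))^2*m*c" by (rule assms(4))
    also have "\<dots> = -1" using m True by (simp add: field_simps)
    finally show ?thesis by simp
  next
    case False
    hence c: "c > 0" using assms by simp
    have "0 \<le> a - 2*(1/c)*m + (1/c)^2*m*c" by (rule assms(4))
    also have "\<dots> = a - m / c" using c by (simp add: field_simps power2_eq_square)
    finally show ?thesis using c by (simp add: field_simps)
  qed
qed

lemma psd_cs:
  assumes "cpsd F"
  shows "(cmod (ip y (F *v v)))^2 \<le> Re (ip y (F *v y)) * Re (ip v (F *v v))"
proof -
  have hF: "herm F" by (rule cpsd_herm[OF assms])
  have nn: "0 \<le> Re (ip w (F *v w))" for w using assms unfolding cpsd_def cquad_ip by blast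
  define b where "b = ip y (F *v v)"
  define m where "m = (cmod b)^2"
  have bb: "b * cnj b = complex_of_real m" unfolding m_def by (rule complex_norm_square[symmetric])
  have vy: "ip v (F *v y) = cnj b" unfolding b_def using herm_ip[OF hF, of v y] ip_cnj by metis
  show ?thesis unfolding b_def[symmetric] m_def[symmetric]
  proof (rule quad2[OF nn nn])
    show "0 \<le> m" unfolding m_def by simp
    fix s :: real
    define t where "t = - (complex_of_real s * cnj b)"
    have e1: "t * b = - complex_of_real (s * m)" unfolding t_def using bb by (simp add: mult_ac)
    have e2: "cnj t * cnj b = - complex_of_real (s * m)" unfolding t_def using bb by (simp add: mult_ac)
    have e3: "cnj t * t = complex_of_real (s^2 * m)" unfolding t_def using bb
      by (simp add: mult_ac power2_eq_square)
    have "ip (y + t *s v) (F *v (y + t *s v)) =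
        ip y (F *v y) + t * b + cnj t * cnj b + cnj t * t * ip v (F *v v)"
      unfolding matvec_add matvec_smult ip_add_left ip_add_right ip_smult_left ip_smult_right b_def[symmetric] vy
      by (simp add: algebra_simps)
    also have "\<dots> = ip y (F *v y) - complex_of_real (2 * s * m) + complex_of_real (s^2 * m) * ip v (F *v v)"
      unfolding e1 e2 e3 by simp
    finally have "Re (ip (y + t *s v) (F *v (y + t *s v))) = Re (ip y (F *v y)) - 2 * s * m + s^2 * m * Re (ip v (F *v v))"
      by simp
    thus "0 \<le> Re (ip y (F *v y)) - 2 * s * m + s^2 * m * Re (ip v (F *v v))" using nn by metis
  qed
qed

lemma OPI:
  fixes F :: "'k::finite \<Rightarrow> complex^'d::finite^'d" and x :: "real^'k"
  assumes psd: "\<And>j. cpsd (F j)" and le: "cloewner_le (\<Sum>j\<in>UNIV. F j) (mat 1)"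
  shows "(norm (lin_comb x F *v v))^2 \<le> (\<Sum>j\<in>UNIV. (x$j)^2 * Re (ip v (F j *v v)))"
proof -
  interpret L: bounded_linear "\<lambda>M::complex^'d^'d. M *v y" for y by (rule bl_matvec)
  define y where "y = lin_comb x F *v v"
  define N where "N = Re (ip y y)"
  define a where "a j = Re (ip y (F j *v y))" for j
  define b where "b j = Re (ip v (F j *v v))" for j
  define B where "B = (\<Sum>j\<in>UNIV. (x$j)^2 * b j)"
  have a0: "a j \<ge> 0" for j using psd unfolding cpsd_def cquad_ip a_def by blast
  have b0: "b j \<ge> 0" for j using psd unfolding cpsd_def cquad_ip b_def by blast
  have B0: "B \<ge> 0" unfolding B_def using b0 by (intro sum_nonneg) simp
  have N0: "N \<ge> 0" unfolding N_def by (simp add: Re_ip_self)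
  have suma: "(\<Sum>j\<in>UNIV. a j) \<le> N"
  proof -
    have "0 \<le> Re (cquad (mat 1 - (\<Sum>j\<in>UNIV. F j)) y)"
      using le unfolding cloewner_le_def cpsd_def by blast
    also have "cquad (mat 1 - (\<Sum>j\<in>UNIV. F j)) y = ip y y - (\<Sum>j\<in>UNIV. ip y (F j *v y))"
      unfolding cquad_ip matrix_vector_mult_diff_rdistrib matrix_vector_mul_lid L.sum ip_diff_right ip_sum_right ..
    finally show ?thesis unfolding N_def a_def by simp
  qed
  have cs: "cmod (ip y (F j *v v)) \<le> sqrt (a j) * sqrt (b j)" for j
  proof -
    have "(cmod (ip y (F j *v v)))^2 \<le> a j * b j"
      unfolding a_def b_def by (rule psd_cs[OF psd])
    hence "cmod (ip y (F j *v v)) \<le> sqrt (a j * b j)" by (rule real_le_rsqrt)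
    thus ?thesis by (simp add: real_sqrt_mult)
  qed
  define S where "S = (\<Sum>j\<in>UNIV. sqrt (a j) * (\<bar>x$j\<bar> * sqrt (b j)))"
  have "ip y y = ip y (lin_comb x F *v v)" by (simp only: y_def)
  hence "N = (\<Sum>j\<in>UNIV. x$j * Re (ip y (F j *v v)))"
    unfolding N_def ip_lc by simp
  also have "\<dots> \<le> (\<Sum>j\<in>UNIV. \<bar>x$j\<bar> * cmod (ip y (F j *v v)))"
  proof (intro sum_mono)
    fix j
    have "x$j * Re (ip y (F j *v v)) \<le> \<bar>x$j * Re (ip y (F j *v v))\<bar>" by simp
    also have "\<dots> = \<bar>x$j\<bar> * \<bar>Re (ip y (F j *v v))\<bar>" by (simp add: abs_mult)
    also have "\<dots> \<le> \<bar>x$j\<bar> * cmod (ip y (F j *v v))" by (intro mult_left_mono abs_Re_le_cmod) simp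
    finally show "x$j * Re (ip y (F j *v v)) \<le> \<bar>x$j\<bar> * cmod (ip y (F j *v v))" .
  qed
  also have "\<dots> \<le> S" unfolding S_def
  proof (intro sum_mono)
    fix j
    have "\<bar>x$j\<bar> * cmod (ip y (F j *v v)) \<le> \<bar>x$j\<bar> * (sqrt (a j) * sqrt (b j))"
      by (intro mult_left_mono cs) simp
    thus "\<bar>x$j\<bar> * cmod (ip y (F j *v v)) \<le> sqrt (a j) * (\<bar>x$j\<bar> * sqrt (b j))" by (simp add: mult_ac)
  qed
  finally have NS: "N \<le> S" .
  have "S^2 \<le> (\<Sum>j\<in>UNIV. (sqrt (a j))^2) * (\<Sum>j\<in>UNIV. (\<bar>x$j\<bar> * sqrt (b j))^2)"
    unfolding S_def by (rule Cauchy_Schwarz_ineq_sum)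
  also have "(\<Sum>j\<in>UNIV. (sqrt (a j))^2) = (\<Sum>j\<in>UNIV. a j)" using a0 by simp
  also have "(\<Sum>j\<in>UNIV. (\<bar>x$j\<bar> * sqrt (b j))^2) = B"
    unfolding B_def using b0 by (intro sum.cong refl) (simp add: power_mult_distrib)
  finally have "S^2 \<le> (\<Sum>j\<in>UNIV. a j) * B" .
  also have "\<dots> \<le> N * B" using suma B0 by (rule mult_right_mono)
  finally have SNB: "S^2 \<le> N * B" .
  have "N^2 \<le> S^2" using NS N0 by (intro power_mono) auto
  hence "N * N \<le> N * B" using SNB by (simp add: power2_eq_square)
  hence "N \<le> B"
  proof (cases "N = 0")
    case True thus ?thesis using B0 by simp
  next
    case False thus ?thesis using \<open>N * N \<le> N * B\<close> N0 by (simp add: mult_le_cancel_left)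
  qed
  moreover have "(norm (lin_comb x F *v v))^2 = N" unfolding N_def y_def by (simp add: Re_ip_self)
  ultimately show ?thesis unfolding B_def b_def by simp
qed

lemma qf_eq: "x \<bullet> ((M::real^'k^'k) *v x) = (\<Sum>i\<in>UNIV. \<Sum>j\<in>UNIV. x$i * M$i$j * x$j)"
  by (simp add: inner_vec_def matrix_vector_mult_def sum_distrib_left mult_ac)

lemma sum4_swap:
  "(\<Sum>i\<in>A. \<Sum>j\<in>B. \<Sum>a\<in>C. \<Sum>b\<in>D. f i j a b) = (\<Sum>a\<in>C. \<Sum>b\<in>D. \<Sum>i\<in>A. \<Sum>j\<in>B. f i j a b)"
proof -
  have "(\<Sum>i\<in>A. \<Sum>j\<in>B. \<Sum>a\<in>C. \<Sum>b\<in>D. f i j a b) = (\<Sum>i\<in>A. \<Sum>a\<in>C. \<Sum>j\<in>B. \<Sum>b\<in>D. f i j a b)"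
    by (rule sum.cong[OF refl], rule sum.swap)
  also have "\<dots> = (\<Sum>a\<in>C. \<Sum>i\<in>A. \<Sum>j\<in>B. \<Sum>b\<in>D. f i j a b)"
    by (rule sum.swap)
  also have "\<dots> = (\<Sum>a\<in>C. \<Sum>i\<in>A. \<Sum>b\<in>D. \<Sum>j\<in>B. f i j a b)"
    by (rule sum.cong[OF refl], rule sum.cong[OF refl], rule sum.swap)
  also have "\<dots> = (\<Sum>a\<in>C. \<Sum>b\<in>D. \<Sum>i\<in>A. \<Sum>j\<in>B. f i j a b)"
    by (rule sum.cong[OF refl], rule sum.swap)
  finally show ?thesis .
qed

theorem theoremC4:
  fixes F :: "'k::finite \<Rightarrow> complex^'d::finite^'d" and lam :: "real^'k"
  assumes "\<And>j. cpsd (F j)"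
    and "cloewner_le (\<Sum>j\<in>UNIV. F j) (mat 1)"
  shows "rloewner_le (Lambda_mat F lam) (Delta_mat F lam)"
proof -
  define H where "H = lin_comb lam F"
  have hF: "herm (F j)" for j using assms(1) by (rule cpsd_herm)
  have hH: "herm H" unfolding H_def by (rule herm_lc[OF hF])
  obtain U h where onb: "onb H U h UNIV" using spectral[OF hH] by blast
  define Kab where "Kab \<alpha> \<beta> = Kf (h \<beta>) (h \<alpha>)" for \<alpha> \<beta>
  have Lam: "Lambda_mat F lam $ i $ j = (\<Sum>\<alpha>\<in>U. \<Sum>\<beta>\<in>U. vv (F j) (F i) \<alpha> \<beta> * Kab \<alpha> \<beta>)" for i j
  proof -
    have "(\<lambda>n. Re (mtrace (F j ** Dn H (F i) n)) / fact n) sums (\<Sum>\<alpha>\<in>U. \<Sum>\<beta>\<in>U. vv (F j) (F i) \<alpha> \<beta> * Kf (h \<beta>) (h \<alpha>))"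
      by (rule Dn_sums[OF onb hH hF])
    hence "(\<Sum>n. Re (mtrace (F j ** Dn H (F i) n)) / fact n) = (\<Sum>\<alpha>\<in>U. \<Sum>\<beta>\<in>U. vv (F j) (F i) \<alpha> \<beta> * Kf (h \<beta>) (h \<alpha>))"
      by (rule sums_unique[symmetric])
    thus ?thesis unfolding Lam_formula Kab_def H_def .
  qed
  have Del: "Delta_mat F lam $ i $ j = (if i = j then (\<Sum>\<alpha>\<in>U. exp (h \<alpha>) * Re (ip \<alpha> (F j *v \<alpha>))) else 0)" for i j
    unfolding Delta_formula using trace_mexp[OF onb hH, of "F j"] unfolding H_def by simp
  have Kab_sym: "Kab \<alpha> \<beta> = Kab \<beta> \<alpha>" for \<alpha> \<beta> unfolding Kab_def by (rule Kf_sym)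
  have Lsym: "Lambda_mat F lam $ i $ j = Lambda_mat F lam $ j $ i" for i j
  proof -
    have "Lambda_mat F lam $ j $ i = (\<Sum>\<alpha>\<in>U. \<Sum>\<beta>\<in>U. vv (F i) (F j) \<alpha> \<beta> * Kab \<alpha> \<beta>)" by (rule Lam)
    also have "\<dots> = (\<Sum>\<beta>\<in>U. \<Sum>\<alpha>\<in>U. vv (F i) (F j) \<alpha> \<beta> * Kab \<alpha> \<beta>)" by (rule sum.swap)
    also have "\<dots> = (\<Sum>\<beta>\<in>U. \<Sum>\<alpha>\<in>U. vv (F j) (F i) \<beta> \<alpha> * Kab \<beta> \<alpha>)"
      by (rule sum.cong[OF refl], rule sum.cong[OF refl]) (simp add: vv_sym[OF hF hF, of i j] Kab_sym)
    also have "\<dots> = Lambda_mat F lam $ i $ j" by (rule Lam[symmetric])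
    finally show ?thesis ..
  qed
  show ?thesis
    unfolding rloewner_le_def rpsd_def
  proof (intro conjI allI)
    have "(Delta_mat F lam - Lambda_mat F lam) $ j $ i = (Delta_mat F lam - Lambda_mat F lam) $ i $ j" for i j
      using Lsym[of i j] by (simp add: Del)
    thus "transpose (Delta_mat F lam - Lambda_mat F lam) = Delta_mat F lam - Lambda_mat F lam"
      by (simp add: vec_eq_iff transpose_def)
  next
    fix x :: "real^'k"
    define X where "X = lin_comb x F"
    have hX: "herm X" unfolding X_def by (rule herm_lc[OF hF])
    define w where "w \<alpha> \<beta> = vv X X \<alpha> \<beta>" for \<alpha> \<beta>
    have w0: "w \<alpha> \<beta> \<ge> 0" for \<alpha> \<beta> unfolding w_def vv_self by simp
    have wsym: "w \<alpha> \<beta> = w \<beta> \<alpha>" for \<alpha> \<beta> unfolding w_def by (rule vv_sym[OF hX hX])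
    have QL: "x \<bullet> (Lambda_mat F lam *v x) = (\<Sum>\<alpha>\<in>U. \<Sum>\<beta>\<in>U. w \<alpha> \<beta> * Kab \<alpha> \<beta>)"
    proof -
      have "x \<bullet> (Lambda_mat F lam *v x) = (\<Sum>i\<in>UNIV. \<Sum>j\<in>UNIV. x$i * Lambda_mat F lam $i$j * x$j)"
        by (rule qf_eq)
      also have "\<dots> = (\<Sum>i\<in>UNIV. \<Sum>j\<in>UNIV. \<Sum>\<alpha>\<in>U. \<Sum>\<beta>\<in>U. x$i * x$j * vv (F j) (F i) \<alpha> \<beta> * Kab \<alpha> \<beta>)"
        unfolding Lam by (simp add: sum_distrib_left sum_distrib_right mult_ac)
      also have "\<dots> = (\<Sum>\<alpha>\<in>U. \<Sum>\<beta>\<in>U. \<Sum>i\<in>UNIV. \<Sum>j\<in>UNIV. x$i * x$j * vv (F j) (F i) \<alpha> \<beta> * Kab \<alpha> \<beta>)"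
        by (rule sum4_swap)
      also have "\<dots> = (\<Sum>\<alpha>\<in>U. \<Sum>\<beta>\<in>U. w \<alpha> \<beta> * Kab \<alpha> \<beta>)"
        unfolding w_def X_def vv_lc by (simp add: sum_distrib_right)
      finally show ?thesis .
    qed
    define R where "R j \<alpha> = Re (ip \<alpha> (F j *v \<alpha>))" for j \<alpha>
    have QD: "x \<bullet> (Delta_mat F lam *v x) = (\<Sum>\<alpha>\<in>U. exp (h \<alpha>) * (\<Sum>j\<in>UNIV. (x$j)^2 * R j \<alpha>))"
    proof -
      have "x \<bullet> (Delta_mat F lam *v x) = (\<Sum>i\<in>UNIV. \<Sum>j\<in>UNIV. x$i * Delta_mat F lam $i$j * x$j)"
        by (rule qf_eq)
      also have "\<dots> = (\<Sum>i\<in>UNIV. x$i * (\<Sum>\<alpha>\<in>U. exp (h \<alpha>) * R i \<alpha>) * x$i)"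
      proof (rule sum.cong[OF refl])
        fix i
        show "(\<Sum>j\<in>UNIV. x$i * Delta_mat F lam $i$j * x$j) = x$i * (\<Sum>\<alpha>\<in>U. exp (h \<alpha>) * R i \<alpha>) * x$i"
          unfolding Del R_def by (simp add: if_distrib if_distribR cong: if_cong)
      qed
      also have "\<dots> = (\<Sum>i\<in>UNIV. \<Sum>\<alpha>\<in>U. exp (h \<alpha>) * ((x$i)^2 * R i \<alpha>))"
        by (rule sum.cong[OF refl]) (simp add: sum_distrib_left sum_distrib_right power2_eq_square mult_ac)
      also have "\<dots> = (\<Sum>\<alpha>\<in>U. \<Sum>i\<in>UNIV. exp (h \<alpha>) * ((x$i)^2 * R i \<alpha>))"
        by (rule sum.swap)
      also have "\<dots> = (\<Sum>\<alpha>\<in>U. exp (h \<alpha>) * (\<Sum>j\<in>UNIV. (x$j)^2 * R j \<alpha>))"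
        by (simp add: sum_distrib_left)
      finally show ?thesis .
    qed
    have OPIa: "(\<Sum>\<beta>\<in>U. w \<alpha> \<beta>) \<le> (\<Sum>j\<in>UNIV. (x$j)^2 * R j \<alpha>)" for \<alpha>
    proof -
      have "(\<Sum>\<beta>\<in>U. w \<alpha> \<beta>) = Re (ip (X *v \<alpha>) (X *v \<alpha>))"
        unfolding w_def vv_self norm_parseval[OF onb hH] ..
      also have "\<dots> = (norm (lin_comb x F *v \<alpha>))^2" unfolding X_def by (rule Re_ip_self)
      also have "\<dots> \<le> (\<Sum>j\<in>UNIV. (x$j)^2 * R j \<alpha>)" unfolding R_def by (rule OPI[OF assms])
      finally show ?thesis .
    qed
    have s1: "(\<Sum>\<alpha>\<in>U. \<Sum>\<beta>\<in>U. w \<alpha> \<beta> * exp (h \<beta>)) = (\<Sum>\<alpha>\<in>U. \<Sum>\<beta>\<in>U. w \<alpha> \<beta> * exp (h \<alpha>))"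
    proof -
      have "(\<Sum>\<alpha>\<in>U. \<Sum>\<beta>\<in>U. w \<alpha> \<beta> * exp (h \<beta>)) = (\<Sum>\<beta>\<in>U. \<Sum>\<alpha>\<in>U. w \<alpha> \<beta> * exp (h \<beta>))"
        by (rule sum.swap)
      also have "\<dots> = (\<Sum>\<beta>\<in>U. \<Sum>\<alpha>\<in>U. w \<beta> \<alpha> * exp (h \<beta>))"
        by (rule sum.cong[OF refl], rule sum.cong[OF refl]) (simp only: wsym[of _ _])
      finally show ?thesis .
    qed
    have A: "2 * (\<Sum>\<alpha>\<in>U. \<Sum>\<beta>\<in>U. w \<alpha> \<beta> * Kab \<alpha> \<beta>) \<le>
        (\<Sum>\<alpha>\<in>U. \<Sum>\<beta>\<in>U. w \<alpha> \<beta> * exp (h \<alpha>)) + (\<Sum>\<alpha>\<in>U. \<Sum>\<beta>\<in>U. w \<alpha> \<beta> * exp (h \<beta>))"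
    proof -
      have "2 * (\<Sum>\<alpha>\<in>U. \<Sum>\<beta>\<in>U. w \<alpha> \<beta> * Kab \<alpha> \<beta>) = (\<Sum>\<alpha>\<in>U. \<Sum>\<beta>\<in>U. w \<alpha> \<beta> * (2 * Kab \<alpha> \<beta>))"
        by (simp add: sum_distrib_left mult_ac)
      also have "\<dots> \<le> (\<Sum>\<alpha>\<in>U. \<Sum>\<beta>\<in>U. w \<alpha> \<beta> * (exp (h \<alpha>) + exp (h \<beta>)))"
      proof (intro sum_mono mult_left_mono w0)
        fix \<alpha> \<beta>
        show "2 * Kab \<alpha> \<beta> \<le> exp (h \<alpha>) + exp (h \<beta>)"
          using Kf_le[of "h \<beta>" "h \<alpha>"] unfolding Kab_def by simp
      qed
      also have "\<dots> = (\<Sum>\<alpha>\<in>U. \<Sum>\<beta>\<in>U. w \<alpha> \<beta> * exp (h \<alpha>)) + (\<Sum>\<alpha>\<in>U. \<Sum>\<beta>\<in>U. w \<alpha> \<beta> * exp (h \<beta>))"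
        by (simp add: distrib_left sum.distrib)
      finally show ?thesis .
    qed
    have "x \<bullet> (Lambda_mat F lam *v x) \<le> (\<Sum>\<alpha>\<in>U. \<Sum>\<beta>\<in>U. w \<alpha> \<beta> * exp (h \<alpha>))"
      using A s1 unfolding QL by simp
    also have "\<dots> = (\<Sum>\<alpha>\<in>U. exp (h \<alpha>) * (\<Sum>\<beta>\<in>U. w \<alpha> \<beta>))"
      by (simp add: sum_distrib_left mult_ac)
    also have "\<dots> \<le> (\<Sum>\<alpha>\<in>U. exp (h \<alpha>) * (\<Sum>j\<in>UNIV. (x$j)^2 * R j \<alpha>))"
      by (intro sum_mono mult_left_mono OPIa) simp
    also have "\<dots> = x \<bullet> (Delta_mat F lam *v x)" by (rule QD[symmetric])
    finally have "x \<bullet> (Lambda_mat F lam *v x) \<le> x \<bullet> (Delta_mat F lam *v x)" .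
    thus "0 \<le> x \<bullet> ((Delta_mat F lam - Lambda_mat F lam) *v x)"
      by (simp add: matrix_vector_mult_diff_rdistrib inner_diff_right)
  qed
qed

end
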